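(* Let $1\le q<p\le\infty$ with $q<2$, and let $A=(a_{ij})$ be a real $m\times n$ matrix. Then $$\|(A\circ A)^T\colon\ell^m_{q^*/2}\to\ell^n_{p^*/2}\|^{1/2}\ge c(p,q)\max_{j\le n}\sqrt{\ln(j+1)}\,b_j^{\downarrow},$$ where $b_j=\|(a_{ij})_{i\le m}\|_{2q/(2-q)}$ and $c(p,q)>0$ depends only on $p,q$.
   Context: $A\circ A=(a_{ij}^2)$, $p^*$ Hölder conjugate of $p$. $\ell_s^n$ is $\mathbb{R}^n$ with $\|x\|_s=(\sum|x_j|^s)^{1/s}$ ($\max$ for $s=\infty$; quasi-norm for $s<1$), $\|B\colon\ell_s^n\to\ell_t^m\|=\sup_{\|x\|_s\le1}\|Bx\|_t$. $(b_j^{\downarrow})$ is the non-increasing rearrangement of $(|b_j|)$. *)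

theory Defs
  imports "HOL-Analysis.Analysis"
begin

definition hconj :: "ereal \<Rightarrow> ereal" where
  "hconj p = (if p = \<infinity> then 1 else if p = 1 then \<infinity>
              else ereal (real_of_ereal p / (real_of_ereal p - 1)))"

definition lnorm :: "ereal \<Rightarrow> nat set \<Rightarrow> (nat \<Rightarrow> real) \<Rightarrow> real" where
  "lnorm s I x = (if s = \<infinity> then (if I = {} then 0 else Max ((\<lambda>i. \<bar>x i\<bar>) ` I))
                  else (\<Sum>i\<in>I. \<bar>x i\<bar> powr real_of_ereal s) powr (1 / real_of_ereal s))"

definition opnorm :: "ereal \<Rightarrow> ereal \<Rightarrow> nat \<Rightarrow> nat \<Rightarrow> (nat \<Rightarrow> nat \<Rightarrow> real) \<Rightarrow> real" where
  "opnorm s t m n B = Sup {lnorm t {1..n} (\<lambda>j. \<Sum>i\<in>{1..m}. B j i * x i) | x.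
                             lnorm s {1..m} x \<le> 1}"

definition decr_rearr :: "nat \<Rightarrow> (nat \<Rightarrow> real) \<Rightarrow> nat \<Rightarrow> real" where
  "decr_rearr n b j = rev (sort (map (\<lambda>k. \<bar>b k\<bar>) [1..<n+1])) ! (j - 1)"

end

theory Submission
  imports Defs
begin



lemma subadd_powr:
  fixes x y s :: real
  assumes "x \<ge> 0" "y \<ge> 0" "0 < s" "s \<le> 1"
  shows "(x + y) powr s \<le> x powr s + y powr s"
proof (cases "x = 0 \<or> y = 0")
  case True then show ?thesis using assms by auto
next
  case False
  then have xp: "x > 0" and yp: "y > 0" using assms by auto
  have "x powr s = x * x powr (s - 1)" using xp by (simp add: powr_diff field_simps)
  also have "\<dots> \<ge> x * (x+y) powr (s - 1)"
    using xp yp assms by (intro mult_left_mono powr_mono2') auto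
  finally have 1: "x powr s \<ge> x * (x+y) powr (s - 1)" .
  have "y powr s = y * y powr (s - 1)" using yp by (simp add: powr_diff field_simps)
  also have "\<dots> \<ge> y * (x+y) powr (s - 1)"
    using xp yp assms by (intro mult_left_mono powr_mono2') auto
  finally have 2: "y powr s \<ge> y * (x+y) powr (s - 1)" .
  have "(x + y) powr s = (x + y) * (x+y) powr (s - 1)" using xp yp by (simp add: powr_diff field_simps)
  also have "\<dots> = x * (x+y) powr (s - 1) + y * (x+y) powr (s - 1)" by (simp add: algebra_simps)
  finally show ?thesis using 1 2 by linarith
qed

lemma superadd_powr:
  fixes x y s :: real
  assumes "x \<ge> 0" "y \<ge> 0" "1 \<le> s"
  shows "x powr s + y powr s \<le> (x + y) powr s"
proof (cases "x = 0 \<or> y = 0")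
  case True then show ?thesis using assms by auto
next
  case False
  then have xp: "x > 0" and yp: "y > 0" using assms by auto
  have "x powr s = x * x powr (s - 1)" using xp by (simp add: powr_diff field_simps)
  also have "\<dots> \<le> x * (x+y) powr (s - 1)"
    using xp yp assms by (intro mult_left_mono powr_mono2) auto
  finally have 1: "x powr s \<le> x * (x+y) powr (s - 1)" .
  have "y powr s = y * y powr (s - 1)" using yp by (simp add: powr_diff field_simps)
  also have "\<dots> \<le> y * (x+y) powr (s - 1)"
    using xp yp assms by (intro mult_left_mono powr_mono2) auto
  finally have 2: "y powr s \<le> y * (x+y) powr (s - 1)" .
  have "(x + y) powr s = (x + y) * (x+y) powr (s - 1)" using xp yp by (simp add: powr_diff field_simps)
  also have "\<dots> = x * (x+y) powr (s - 1) + y * (x+y) powr (s - 1)" by (simp add: algebra_simps)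
  finally show ?thesis using 1 2 by linarith
qed

lemma subadd_powr_sum:
  fixes f :: "'a \<Rightarrow> real"
  assumes "finite S" "\<And>k. k \<in> S \<Longrightarrow> f k \<ge> 0" "0 < s" "s \<le> 1"
  shows "(\<Sum>k\<in>S. f k) powr s \<le> (\<Sum>k\<in>S. f k powr s)"
  using assms
proof (induction S rule: finite_induct)
  case empty then show ?case by simp
next
  case (insert a F)
  have "(\<Sum>k\<in>insert a F. f k) powr s = (f a + (\<Sum>k\<in>F. f k)) powr s" using insert by simp
  also have "\<dots> \<le> f a powr s + (\<Sum>k\<in>F. f k) powr s"
    using insert by (intro subadd_powr sum_nonneg) auto
  also have "\<dots> \<le> f a powr s + (\<Sum>k\<in>F. f k powr s)" using insert by auto
  finally show ?case using insert by simp
qed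

lemma superadd_powr_sum:
  fixes f :: "'a \<Rightarrow> real"
  assumes "finite S" "\<And>k. k \<in> S \<Longrightarrow> f k \<ge> 0" "1 \<le> s"
  shows "(\<Sum>k\<in>S. f k powr s) \<le> (\<Sum>k\<in>S. f k) powr s"
  using assms
proof (induction S rule: finite_induct)
  case empty then show ?case by simp
next
  case (insert a F)
  have "(\<Sum>k\<in>insert a F. f k powr s) = f a powr s + (\<Sum>k\<in>F. f k powr s)" using insert by simp
  also have "\<dots> \<le> f a powr s + (\<Sum>k\<in>F. f k) powr s" using insert by auto
  also have "\<dots> \<le> (f a + (\<Sum>k\<in>F. f k)) powr s"
    using insert by (intro superadd_powr sum_nonneg) auto
  finally show ?case using insert by simp
qed



lemma power_mean_lower:
  fixes y :: "'a \<Rightarrow> real"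
  assumes S: "finite S" "S \<noteq> {}" and y: "\<And>k. k \<in> S \<Longrightarrow> y k \<ge> 0" and s: "0 < s"
  shows "real (card S) powr (min 0 (1/s - 1)) * (\<Sum>k\<in>S. y k) \<le> (\<Sum>k\<in>S. y k powr s) powr (1/s)"
proof (cases "s \<le> 1")
  case True
  have cS: "card S > 0" using S by (simp add: card_gt_0_iff)
  have "min 0 (1/s - 1) = 0" using True s by (simp add: field_simps)
  then have "real (card S) powr (min 0 (1/s - 1)) * (\<Sum>k\<in>S. y k) = ((\<Sum>k\<in>S. y k) powr s) powr (1/s)"
    using cS s y by (simp add: powr_powr sum_nonneg)
  also have "\<dots> \<le> (\<Sum>k\<in>S. y k powr s) powr (1/s)"
    using s True y S by (intro powr_mono2 subadd_powr_sum sum_nonneg) auto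
  finally show ?thesis .
next
  case False
  define S' where "S' = {k\<in>S. y k > 0}"
  have S'S: "S' \<subseteq> S" and fS': "finite S'" using S by (auto simp: S'_def)
  have Y: "(\<Sum>k\<in>S. y k) = (\<Sum>k\<in>S'. y k)"
    using S y by (intro sum.mono_neutral_right) (auto simp: S'_def, force)
  have Z: "(\<Sum>k\<in>S. y k powr s) = (\<Sum>k\<in>S'. y k powr s)"
    using S y by (intro sum.mono_neutral_right) (auto simp: S'_def, force)
  show ?thesis
  proof (cases "S' = {}")
    case True
    then show ?thesis using Y by simp
  next
    case ne: False
    define J where "J = real (card S')"
    define J0 where "J0 = real (card S)"
    have Jp: "J > 0" using ne fS' by (simp add: J_def card_gt_0_iff)
    have JJ0: "J \<le> J0" unfolding J_def J0_def using card_mono[OF S(1) S'S] by simp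
    define Yv where "Yv = (\<Sum>k\<in>S'. y k)"
    define Zv where "Zv = (\<Sum>k\<in>S'. y k powr s)"
    have Ynn: "Yv \<ge> 0" unfolding Yv_def using S'S y by (intro sum_nonneg) auto
    have cv: "(\<Sum>k\<in>S'. (1/J) *\<^sub>R y k) powr s \<le> (\<Sum>k\<in>S'. (1/J) * y k powr s)"
      using convex_on_sum[OF fS' ne powr_convex[of s], where a="\<lambda>_. 1/J" and y=y] False Jp
      by (auto simp: S'_def J_def)
    then have "(Yv / J) powr s \<le> Zv / J"
      by (simp add: Yv_def Zv_def sum_divide_distrib[symmetric] sum_distrib_left[symmetric] field_simps)
    then have "Yv powr s / J powr s \<le> Zv / J" using Ynn Jp by (simp add: powr_divide)
    then have "Yv powr s * (J powr (1 - s)) \<le> Zv" using Jp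
      by (simp add: powr_diff field_simps)
    moreover have "J0 powr (1 - s) \<le> J powr (1 - s)"
      using JJ0 Jp False by (intro powr_mono2') auto
    ultimately have "Yv powr s * (J0 powr (1 - s)) \<le> Zv"
      by (meson Ynn order_trans mult_left_mono powr_ge_zero)
    moreover have "(J0 powr (1/s - 1) * Yv) powr s = Yv powr s * (J0 powr (1 - s))"
    proof -
      have e: "(1/s - 1) * s = 1 - s" using s by (simp add: field_simps)
      have "(J0 powr (1/s - 1) * Yv) powr s = (J0 powr (1/s - 1)) powr s * Yv powr s"
        using Ynn Jp JJ0 by (simp add: powr_mult)
      also have "\<dots> = J0 powr ((1/s - 1) * s) * Yv powr s" by (simp only: powr_powr)
      finally have X: "(J0 powr (1/s - 1) * Yv) powr s = J0 powr ((1/s - 1) * s) * Yv powr s" .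
      show ?thesis unfolding X e by (rule mult.commute)
    qed
    ultimately have "(J0 powr (1/s - 1) * Yv) powr s \<le> Zv" by simp
    then have "((J0 powr (1/s - 1) * Yv) powr s) powr (1/s) \<le> Zv powr (1/s)"
      using s Ynn by (intro powr_mono2) auto
    moreover have "((J0 powr (1/s - 1) * Yv) powr s) powr (1/s) = J0 powr (1/s - 1) * Yv"
      using s Ynn by (simp add: powr_powr)
    moreover have "min 0 (1/s - 1) = 1/s - 1" using False s by (simp add: field_simps)
    ultimately show ?thesis using Y Z by (simp add: J0_def Yv_def Zv_def)
  qed
qed


lemma lnorm_fin: "lnorm (ereal r) I x = (\<Sum>i\<in>I. \<bar>x i\<bar> powr r) powr (1 / r)"
  by (simp add: lnorm_def)

lemma lnorm_le1_entry:
  assumes sin: "s = \<infinity> \<or> (\<exists>r>0. s = ereal r)" and x: "lnorm s {1..m} x \<le> 1"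
    and i: "i \<in> {1..m}"
  shows "\<bar>x i\<bar> \<le> 1"
  using sin
proof
  assume "s = \<infinity>"
  then have "lnorm s {1..m} x = Max ((\<lambda>i. \<bar>x i\<bar>) ` {1..m})" using i by (auto simp: lnorm_def)
  moreover have "\<bar>x i\<bar> \<le> Max ((\<lambda>i. \<bar>x i\<bar>) ` {1..m})" using i by (intro Max_ge) auto
  ultimately show ?thesis using x by linarith
next
  assume "\<exists>r>0. s = ereal r"
  then obtain r where r: "r > 0" "s = ereal r" by blast
  have "(\<Sum>i\<in>{1..m}. \<bar>x i\<bar> powr r) powr (1/r) \<le> 1" using x r by (simp add: lnorm_fin)
  then have Sle: "(\<Sum>i\<in>{1..m}. \<bar>x i\<bar> powr r) \<le> 1"
    using r by (metis less_eq_real_def linorder_not_le gr_one_powr zero_less_divide_1_iff)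
  have "\<bar>x i\<bar> powr r \<le> (\<Sum>i\<in>{1..m}. \<bar>x i\<bar> powr r)"
    using i by (intro member_le_sum) auto
  then have "\<bar>x i\<bar> powr r \<le> 1" using Sle by linarith
  then show ?thesis using r
    by (metis less_eq_real_def linorder_not_le gr_one_powr)
qed

lemma opnorm_lower:
  assumes sin: "s = \<infinity> \<or> (\<exists>r>0. s = ereal r)" and t: "t > 0"
    and x: "lnorm s {1..m} x \<le> 1"
  shows "lnorm (ereal t) {1..n} (\<lambda>j. \<Sum>i\<in>{1..m}. B j i * x i) \<le> opnorm s (ereal t) m n B"
  unfolding opnorm_def
proof (rule cSup_upper)
  show "lnorm (ereal t) {1..n} (\<lambda>j. \<Sum>i\<in>{1..m}. B j i * x i)
    \<in> {lnorm (ereal t) {1..n} (\<lambda>j. \<Sum>i\<in>{1..m}. B j i * x i) | x. lnorm s {1..m} x \<le> 1}"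
    using x by blast
  define M where "M = (\<Sum>j\<in>{1..n}. \<Sum>i\<in>{1..m}. \<bar>B j i\<bar>)"
  show "bdd_above {lnorm (ereal t) {1..n} (\<lambda>j. \<Sum>i\<in>{1..m}. B j i * x i) | x. lnorm s {1..m} x \<le> 1}"
  proof (rule bdd_aboveI, safe)
    fix z assume z: "lnorm s {1..m} z \<le> 1"
    have yb: "\<bar>\<Sum>i\<in>{1..m}. B j i * z i\<bar> \<le> M" if j: "j \<in> {1..n}" for j
    proof -
      have "\<bar>\<Sum>i\<in>{1..m}. B j i * z i\<bar> \<le> (\<Sum>i\<in>{1..m}. \<bar>B j i * z i\<bar>)" by (rule sum_abs)
      also have "\<dots> \<le> (\<Sum>i\<in>{1..m}. \<bar>B j i\<bar>)"
      proof (rule sum_mono)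
        fix i assume "i \<in> {1..m}"
        then have "\<bar>z i\<bar> \<le> 1" using lnorm_le1_entry[OF sin z] by blast
        then show "\<bar>B j i * z i\<bar> \<le> \<bar>B j i\<bar>"
          by (simp add: abs_mult mult_left_le)
      qed
      also have "\<dots> \<le> M" unfolding M_def using j
        by (rule member_le_sum[where f="\<lambda>j. \<Sum>i\<in>{1..m}. \<bar>B j i\<bar>"]) (auto intro: sum_nonneg)
      finally show ?thesis .
    qed
    have "(\<Sum>j\<in>{1..n}. \<bar>\<Sum>i\<in>{1..m}. B j i * z i\<bar> powr t) \<le> (\<Sum>j\<in>{1..n}. M powr t)"
      using yb t by (intro sum_mono powr_mono2) auto
    then have "(\<Sum>j\<in>{1..n}. \<bar>\<Sum>i\<in>{1..m}. B j i * z i\<bar> powr t) powr (1/t) \<le> (\<Sum>j\<in>{1..n}. M powr t) powr (1/t)"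
      using t by (intro powr_mono2) (auto intro: sum_nonneg)
    then show "lnorm (ereal t) {1..n} (\<lambda>j. \<Sum>i\<in>{1..m}. B j i * z i) \<le> (\<Sum>j\<in>{1..n}. M powr t) powr (1/t)"
      by (simp add: lnorm_fin)
  qed
qed

lemma mult_powr_pred:
  fixes b r :: real
  assumes "b \<ge> 0"
  shows "b * b powr (r - 1) = b powr r"
proof (cases "b = 0")
  case True then show ?thesis by simp
next
  case False
  have "b powr (1 + (r - 1)) = b powr 1 * b powr (r - 1)" by (rule powr_add)
  then show ?thesis using assms by simp
qed

lemma dual_vec:
  fixes \<beta> :: "nat \<Rightarrow> real"
  assumes rho: "\<rho> \<ge> 1" and beta: "\<And>i. i \<in> {1..m} \<Longrightarrow> \<beta> i \<ge> 0" and m: "m \<ge> 1"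
  shows "\<exists>x. lnorm (if \<rho> = 1 then \<infinity> else ereal (\<rho>/(\<rho>-1))) {1..m} x \<le> 1 \<and> (\<forall>i. x i \<ge> 0) \<and>
     (\<Sum>i\<in>{1..m}. \<beta> i powr \<rho>) powr (1/\<rho>) \<le> (\<Sum>i\<in>{1..m}. \<beta> i * x i)"
proof (cases "\<rho> = 1")
  case True
  have "lnorm \<infinity> {1..m} (\<lambda>_. 1) = 1" using m
    by (auto simp: lnorm_def image_constant_conv)
  moreover have "(\<Sum>i\<in>{1..m}. \<beta> i powr 1) = (\<Sum>i\<in>{1..m}. \<beta> i)"
    using beta by (intro sum.cong) auto
  moreover have "(\<Sum>i\<in>{1..m}. \<beta> i) \<ge> 0" using beta by (intro sum_nonneg) auto
  ultimately show ?thesis using True by (intro exI[of _ "\<lambda>_. 1"]) auto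
next
  case False
  then have rho1: "\<rho> > 1" using rho by auto
  define r where "r = \<rho>/(\<rho>-1)"
  have r0: "r > 0" using rho1 by (simp add: r_def)
  have rr: "(\<rho> - 1) * r = \<rho>" using rho1 by (simp add: r_def field_simps)
  define Sg where "Sg = (\<Sum>i\<in>{1..m}. \<beta> i powr \<rho>)"
  define N where "N = Sg powr (1/\<rho>)"
  have Sg0: "Sg \<ge> 0" unfolding Sg_def by (intro sum_nonneg) auto
  have NS: "N powr \<rho> = Sg" using rho1 Sg0 by (simp add: N_def powr_powr)
  show ?thesis
  proof (cases "N = 0")
    case True
    have "lnorm (ereal r) {1..m} (\<lambda>_. 0) \<le> 1" by (simp add: lnorm_fin)
    then show ?thesis using False True by (intro exI[of _ "\<lambda>_. 0"]) (auto simp: r_def N_def Sg_def)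
  next
    case Nnz: False
    then have Np: "N > 0" by (simp add: N_def)
    define x where "x i = \<beta> i powr (\<rho> - 1) / N powr (\<rho> - 1)" for i
    have xnn: "x i \<ge> 0" for i by (simp add: x_def)
    have "(\<Sum>i\<in>{1..m}. \<bar>x i\<bar> powr r) = (\<Sum>i\<in>{1..m}. \<beta> i powr \<rho> / N powr \<rho>)"
    proof (rule sum.cong)
      fix i assume i: "i \<in> {1..m}"
      have "\<bar>x i\<bar> powr r = (\<beta> i powr (\<rho> - 1)) powr r / (N powr (\<rho> - 1)) powr r"
        using xnn[of i] by (simp add: x_def powr_divide)
      also have "\<dots> = \<beta> i powr \<rho> / N powr \<rho>" by (simp add: powr_powr rr)
      finally show "\<bar>x i\<bar> powr r = \<beta> i powr \<rho> / N powr \<rho>" .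
    qed simp
    also have "\<dots> = Sg / N powr \<rho>" by (simp add: Sg_def sum_divide_distrib)
    also have "\<dots> = 1" using NS Np by (simp add: N_def)
    finally have ln1: "lnorm (ereal r) {1..m} x \<le> 1" by (simp add: lnorm_fin)
    have "(\<Sum>i\<in>{1..m}. \<beta> i * x i) = (\<Sum>i\<in>{1..m}. \<beta> i powr \<rho>) / N powr (\<rho> - 1)"
      unfolding sum_divide_distrib
      by (intro sum.cong) (auto simp: x_def mult_powr_pred beta)
    also have "\<dots> = N powr \<rho> / N powr (\<rho> - 1)" using NS by (simp add: Sg_def)
    also have "\<dots> = N" using Np by (simp add: powr_diff)
    finally have "N = (\<Sum>i\<in>{1..m}. \<beta> i * x i)" by simp
    then show ?thesis using ln1 xnn False by (intro exI[of _ x]) (auto simp: r_def N_def Sg_def)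
  qed
qed



lemma length_filter_sort: "length (filter P (sort xs)) = length (filter P xs)"
  by (metis mset_filter mset_sort size_mset)

lemma decr_rearr_nonneg:
  assumes "1 \<le> j" "j \<le> n"
  shows "decr_rearr n f j \<ge> 0"
proof -
  define xs where "xs = map (\<lambda>k. \<bar>f k\<bar>) [1..<n+1]"
  have l: "j - 1 < length (rev (sort xs))" using assms by (simp add: xs_def)
  have "rev (sort xs) ! (j - 1) \<in> set (rev (sort xs))" using l by (rule nth_mem)
  then have "rev (sort xs) ! (j - 1) \<in> set xs" by simp
  then obtain k where "rev (sort xs) ! (j - 1) = \<bar>f k\<bar>" unfolding xs_def by auto
  then show ?thesis unfolding decr_rearr_def xs_def by simp
qed

lemma decr_rearr_card:
  assumes j: "1 \<le> j" "j \<le> n"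
  shows "j \<le> card {k\<in>{1..n}. decr_rearr n f j \<le> \<bar>f k\<bar>}"
proof -
  define xs where "xs = map (\<lambda>k. \<bar>f k\<bar>) [1..<n+1]"
  define L where "L = rev (sort xs)"
  define v where "v = decr_rearr n f j"
  have v: "v = L ! (j - 1)" by (simp add: v_def decr_rearr_def L_def xs_def)
  have lenL: "length L = n" by (simp add: L_def xs_def)
  have sL: "sorted (rev L)" by (simp add: L_def)
  have all: "\<forall>y\<in>set (take j L). v \<le> y"
  proof
    fix y assume "y \<in> set (take j L)"
    then obtain i where i: "i < length (take j L)" "y = take j L ! i" by (metis in_set_conv_nth)
    then have "i \<le> j - 1" "i < j" by auto
    then have "L ! (j - 1) \<le> L ! i" using sorted_rev_nth_mono[OF sL, of i "j-1"] j lenL by auto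
    then show "v \<le> y" using i v by simp
  qed
  have ft: "filter (\<lambda>y. v \<le> y) (take j L) = take j L" using all by (rule filter_True)
  have c1: "j = length (filter (\<lambda>y. v \<le> y) (take j L))"
    unfolding ft using lenL j by simp
  have c2: "length (filter (\<lambda>y. v \<le> y) L) = length (filter (\<lambda>y. v \<le> y) (take j L)) + length (filter (\<lambda>y. v \<le> y) (drop j L))"
    by (metis append_take_drop_id filter_append length_append)
  have c3: "length (filter (\<lambda>y. v \<le> y) L) = length (filter (\<lambda>y. v \<le> y) xs)"
    unfolding L_def by (simp only: rev_filter[symmetric] length_rev length_filter_sort)
  have c4: "length (filter (\<lambda>y. v \<le> y) xs) = length (filter (\<lambda>k. v \<le> \<bar>f k\<bar>) [1..<n+1])"
    by (simp add: xs_def filter_map o_def)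
  have c5: "length (filter (\<lambda>k. v \<le> \<bar>f k\<bar>) [1..<n+1]) = card ({k. v \<le> \<bar>f k\<bar>} \<inter> set [1..<n+1])"
    by (rule distinct_length_filter) simp
  have c6: "{k. v \<le> \<bar>f k\<bar>} \<inter> set [1..<n+1] = {k\<in>{1..n}. v \<le> \<bar>f k\<bar>}" by auto
  have "j \<le> card {k\<in>{1..n}. v \<le> \<bar>f k\<bar>}"
    using c1 c2 c3 c4 c5 unfolding c6 by linarith
  then show ?thesis by (simp only: v_def)
qed


lemma ln_bound:
  fixes d :: real and j :: nat
  assumes d: "d > 0" and j: "j \<ge> 1"
  shows "ln (real j + 1) \<le> (1 + 1/d) * real j powr d"
proof -
  have jp: "real j \<ge> 1" using j by simp
  have "ln (real j + 1) \<le> ln (2 * real j)" using jp by simp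
  also have "\<dots> = ln 2 + ln (real j)" using jp by (simp add: ln_mult)
  also have "ln 2 \<le> real j powr d" using jp d
    using ln_2_less_1 ge_one_powr_ge_zero[of "real j" d] by linarith
  also have "ln (real j) \<le> real j powr d / d"
  proof -
    have "ln (real j powr d) \<le> real j powr d - 1" using jp by (intro ln_le_minus_one) auto
    then have "d * ln (real j) \<le> real j powr d" using jp by (simp add: ln_powr)
    then show ?thesis using d by (simp add: field_simps)
  qed
  finally show ?thesis by (simp add: field_simps)
qed



lemma key_claim:
  fixes A :: "nat \<Rightarrow> nat \<Rightarrow> real" and \<rho> t :: real
  assumes rho: "\<rho> \<ge> 1" and t: "t > 0" and m: "m \<ge> 1" and j: "1 \<le> j" "j \<le> n"
    and d: "min 0 (1/t - 1) + 1/\<rho> \<ge> 0"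
  defines "sI \<equiv> (if \<rho> = 1 then \<infinity> else ereal (\<rho>/(\<rho>-1)))"
  defines "b \<equiv> (\<lambda>k. lnorm (ereal (2*\<rho>)) {1..m} (\<lambda>i. A i k))"
  defines "T \<equiv> decr_rearr n b j"
  shows "real j powr (min 0 (1/t - 1) + 1/\<rho>) * T\<^sup>2 \<le> opnorm sI (ereal t) m n (\<lambda>j i. (A i j)\<^sup>2)"
proof -
  define S where "S = {k\<in>{1..n}. T \<le> \<bar>b k\<bar>}"
  define J where "J = card S"
  have jJ: "j \<le> J" unfolding J_def S_def T_def by (rule decr_rearr_card[OF j])
  have T0: "T \<ge> 0" unfolding T_def by (rule decr_rearr_nonneg[OF j])
  have fS: "finite S" and SS: "S \<subseteq> {1..n}" by (auto simp: S_def)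
  have Sne: "S \<noteq> {}" using jJ j by (auto simp: J_def)
  define \<beta> where "\<beta> i = (\<Sum>k\<in>S. (A i k)\<^sup>2)" for i
  have bnn: "\<beta> i \<ge> 0" for i unfolding \<beta>_def by (intro sum_nonneg) auto
  obtain x where x1: "lnorm sI {1..m} x \<le> 1" and xnn: "\<forall>i. x i \<ge> 0"
    and xN: "(\<Sum>i\<in>{1..m}. \<beta> i powr \<rho>) powr (1/\<rho>) \<le> (\<Sum>i\<in>{1..m}. \<beta> i * x i)"
  proof -
    have "\<exists>x. lnorm sI {1..m} x \<le> 1 \<and> (\<forall>i. x i \<ge> 0) \<and>
       (\<Sum>i\<in>{1..m}. \<beta> i powr \<rho>) powr (1/\<rho>) \<le> (\<Sum>i\<in>{1..m}. \<beta> i * x i)"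
      unfolding sI_def by (rule dual_vec[OF rho _ m]) (rule bnn)
    then show ?thesis using that by blast
  qed
  define N where "N = (\<Sum>i\<in>{1..m}. \<beta> i powr \<rho>) powr (1/\<rho>)"
  define y where "y k = (\<Sum>i\<in>{1..m}. (A i k)\<^sup>2 * x i)" for k
  have ynn: "y k \<ge> 0" for k unfolding y_def using xnn by (intro sum_nonneg) auto
  have sIc: "sI = \<infinity> \<or> (\<exists>r>0. sI = ereal r)"
    unfolding sI_def using rho by auto
  define Onr where "Onr = opnorm sI (ereal t) m n (\<lambda>j i. (A i j)\<^sup>2)"
  have O1: "lnorm (ereal t) {1..n} y \<le> Onr"
    unfolding Onr_def y_def by (rule opnorm_lower[OF sIc t x1])
  have "(\<Sum>k\<in>S. y k powr t) \<le> (\<Sum>k\<in>{1..n}. y k powr t)"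
    using SS by (intro sum_mono2) auto
  also have "\<dots> = (\<Sum>k\<in>{1..n}. \<bar>y k\<bar> powr t)" using ynn by simp
  finally have "(\<Sum>k\<in>S. y k powr t) \<le> (\<Sum>k\<in>{1..n}. \<bar>y k\<bar> powr t)" .
  then have "(\<Sum>k\<in>S. y k powr t) powr (1/t) \<le> lnorm (ereal t) {1..n} y"
    unfolding lnorm_fin using t by (intro powr_mono2) (auto intro: sum_nonneg)
  moreover have "real J powr (min 0 (1/t - 1)) * (\<Sum>k\<in>S. y k) \<le> (\<Sum>k\<in>S. y k powr t) powr (1/t)"
    unfolding J_def using fS Sne ynn t by (intro power_mean_lower) auto
  moreover have "(\<Sum>k\<in>S. y k) = (\<Sum>i\<in>{1..m}. \<beta> i * x i)"
    unfolding y_def \<beta>_def sum_distrib_right by (rule sum.swap)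
  ultimately have O2: "real J powr (min 0 (1/t - 1)) * N \<le> Onr"
    using O1 xN unfolding N_def
    by (smt (verit, best) mult_left_mono powr_ge_zero)
  have bpow: "\<bar>b k\<bar> powr (2*\<rho>) = (\<Sum>i\<in>{1..m}. \<bar>A i k\<bar> powr (2*\<rho>))" for k
  proof -
    have nn: "(\<Sum>i\<in>{1..m}. \<bar>A i k\<bar> powr (2*\<rho>)) \<ge> 0" by (intro sum_nonneg) auto
    have "\<bar>b k\<bar> = (\<Sum>i\<in>{1..m}. \<bar>A i k\<bar> powr (2*\<rho>)) powr (1/(2*\<rho>))"
      unfolding b_def lnorm_fin by simp
    then show ?thesis using nn rho by (simp add: powr_powr)
  qed
  have sq: "((A i k)\<^sup>2) powr \<rho> = \<bar>A i k\<bar> powr (2*\<rho>)" for i k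
  proof -
    have e: "(A i k)\<^sup>2 = \<bar>A i k\<bar> powr 2" by (simp add: powr_numeral)
    show ?thesis by (subst e) (rule powr_powr)
  qed
  have "real J * T powr (2*\<rho>) = (\<Sum>k\<in>S. T powr (2*\<rho>))" by (simp add: J_def)
  also have "\<dots> \<le> (\<Sum>k\<in>S. \<bar>b k\<bar> powr (2*\<rho>))"
    using T0 rho by (intro sum_mono powr_mono2) (auto simp: S_def)
  also have "\<dots> = (\<Sum>k\<in>S. \<Sum>i\<in>{1..m}. ((A i k)\<^sup>2) powr \<rho>)" by (simp add: bpow sq)
  also have "\<dots> = (\<Sum>i\<in>{1..m}. \<Sum>k\<in>S. ((A i k)\<^sup>2) powr \<rho>)" by (rule sum.swap)
  also have "\<dots> \<le> (\<Sum>i\<in>{1..m}. \<beta> i powr \<rho>)"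
    unfolding \<beta>_def using fS rho by (intro sum_mono superadd_powr_sum) auto
  finally have NP: "real J * T powr (2*\<rho>) \<le> (\<Sum>i\<in>{1..m}. \<beta> i powr \<rho>)" .
  have "(real J * T powr (2*\<rho>)) powr (1/\<rho>) \<le> N"
    unfolding N_def using NP rho T0 by (intro powr_mono2) auto
  moreover have "(real J * T powr (2*\<rho>)) powr (1/\<rho>) = real J powr (1/\<rho>) * T\<^sup>2"
  proof -
    have "(real J * T powr (2*\<rho>)) powr (1/\<rho>) = real J powr (1/\<rho>) * (T powr (2*\<rho>)) powr (1/\<rho>)"
      by (simp add: powr_mult)
    also have "(T powr (2*\<rho>)) powr (1/\<rho>) = T powr 2" using rho by (simp add: powr_powr)
    also have "T powr 2 = T\<^sup>2" using T0 by (simp add: powr_numeral)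
    finally show ?thesis .
  qed
  ultimately have NL: "real J powr (1/\<rho>) * T\<^sup>2 \<le> N" by simp
  have Jp: "real J > 0" using jJ j by simp
  have "real j powr (min 0 (1/t - 1) + 1/\<rho>) * T\<^sup>2 \<le> real J powr (min 0 (1/t - 1) + 1/\<rho>) * T\<^sup>2"
    using jJ d by (intro mult_right_mono powr_mono2) auto
  also have "\<dots> = real J powr (min 0 (1/t - 1)) * (real J powr (1/\<rho>) * T\<^sup>2)"
    using Jp by (simp add: powr_add)
  also have "\<dots> \<le> real J powr (min 0 (1/t - 1)) * N"
    using NL by (intro mult_left_mono) auto
  also have "\<dots> \<le> Onr" by (rule O2)
  finally show ?thesis unfolding Onr_def .
qed



theorem proposition5p4:
  fixes p q :: ereal
  assumes "1 \<le> q" and "q < p" and "q < 2"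
  shows "\<exists>c>0. \<forall>(m::nat) (n::nat) (A :: nat \<Rightarrow> nat \<Rightarrow> real). m \<ge> 1 \<longrightarrow> n \<ge> 1 \<longrightarrow>
    opnorm (hconj q / 2) (hconj p / 2) m n (\<lambda>j i. (A i j)\<^sup>2) powr (1/2)
      \<ge> c * Max ((\<lambda>j. sqrt (ln (real j + 1)) *
               decr_rearr n (\<lambda>j. lnorm (ereal (2 * real_of_ereal q / (2 - real_of_ereal q)))
                                   {1..m} (\<lambda>i. A i j)) j) ` {1..n})"
proof -
  obtain qr where q: "q = ereal qr" and qr1: "1 \<le> qr" and qr2: "qr < 2"
    using assms by (cases q) auto
  define \<rho> where "\<rho> = qr / (2 - qr)"
  have rho: "\<rho> \<ge> 1" using qr1 qr2 by (simp add: \<rho>_def field_simps)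
  have sig: "2 * real_of_ereal q / (2 - real_of_ereal q) = 2 * \<rho>" by (simp add: q \<rho>_def)
  have sin: "hconj q / 2 = (if \<rho> = 1 then \<infinity> else ereal (\<rho>/(\<rho>-1)))"
  proof (cases "qr = 1")
    case True
    then have "\<rho> = 1" by (simp add: \<rho>_def)
    then show ?thesis using True by (simp add: q hconj_def one_ereal_def)
  next
    case False
    then have r1: "\<rho> \<noteq> 1" using qr2 by (simp add: \<rho>_def field_simps)
    have h0: "2 - qr \<noteq> 0" "qr - 1 \<noteq> 0" using False qr2 by auto
    have h1: "\<rho> - 1 = 2 * (qr - 1) / (2 - qr)" using h0 by (simp add: \<rho>_def field_simps)
    have "\<rho> / (\<rho> - 1) = (qr / (2 - qr)) / (2 * (qr - 1) / (2 - qr))" by (subst h1) (simp only: \<rho>_def)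
    also have "\<dots> = qr / (2 - qr) * ((2 - qr) / (2 * (qr - 1)))" by (rule divide_inverse_commute[THEN trans]) simp
    also have "\<dots> = qr / (qr - 1) / 2" using h0 by simp
    finally have "qr / (qr - 1) / 2 = \<rho> / (\<rho> - 1)" by simp
    then show ?thesis using False r1 by (simp add: q hconj_def one_ereal_def)
  qed
  obtain t where tdef: "hconj p / 2 = ereal t" and t0: "t > 0" and tq: "1/t - 1 + 1/\<rho> > 0"
  proof (cases p)
    case PInf
    have "1/(1/2) - 1 + 1/\<rho> > 0" using rho by (simp add: field_simps)
    moreover have "hconj p / 2 = ereal (1/2)" using PInf by (simp add: hconj_def one_ereal_def)
    ultimately show ?thesis by (intro that[of "1/2"]) auto
  next
    case (real pr)
    then have prq: "pr > qr" using assms q by simp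
    then have pr1: "pr > 1" using qr1 by simp
    have "hconj p / 2 = ereal (pr / (pr - 1) / 2)" using real pr1
      by (simp add: hconj_def one_ereal_def)
    moreover have "pr / (pr - 1) / 2 > 0" using pr1 by simp
    moreover have "1 / (pr / (pr - 1) / 2) - 1 + 1/\<rho> > 0"
    proof -
      have "1 / (pr / (pr - 1) / 2) - 1 + 1/\<rho> = 2/qr - 2/pr"
        using pr1 qr1 qr2 by (simp add: \<rho>_def field_simps)
      moreover have "2/pr < 2/qr" using prq qr1 by (simp add: field_simps)
      ultimately show ?thesis by simp
    qed
    ultimately show ?thesis using that by blast
  next
    case MInf
    then show ?thesis using assms by simp
  qed
  define \<delta> where "\<delta> = min 0 (1/t - 1) + 1/\<rho>"
  have d0: "\<delta> > 0"
  proof -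
    have "1/\<rho> > 0" using rho by simp
    then show ?thesis using tq unfolding \<delta>_def min_def by auto
  qed
  define c where "c = 1 / sqrt (1 + 1/\<delta>)"
  have d1: "1 + 1/\<delta> > 0"
  proof -
    have "1/\<delta> > 0" using d0 by simp
    then show ?thesis by linarith
  qed
  have cp: "c > 0" using d1 by (simp add: c_def)
  show ?thesis
  proof (intro exI[of _ c] conjI allI impI)
    show "c > 0" by (rule cp)
    fix m n :: nat and A :: "nat \<Rightarrow> nat \<Rightarrow> real"
    assume m: "m \<ge> 1" and n: "n \<ge> 1"
    define b where "b = (\<lambda>k. lnorm (ereal (2*\<rho>)) {1..m} (\<lambda>i. A i k))"
    define Onr where "Onr = opnorm (if \<rho> = 1 then \<infinity> else ereal (\<rho>/(\<rho>-1))) (ereal t) m n (\<lambda>j i. (A i j)\<^sup>2)"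
    define f where "f = (\<lambda>j. sqrt (ln (real j + 1)) * decr_rearr n b j)"
    have claim: "c * f j \<le> sqrt Onr" if j: "j \<in> {1..n}" for j
    proof -
      have j1: "1 \<le> j" "j \<le> n" using j by auto
      define T where "T = decr_rearr n b j"
      have T0: "T \<ge> 0" unfolding T_def by (rule decr_rearr_nonneg[OF j1])
      have K: "real j powr \<delta> * T\<^sup>2 \<le> Onr"
        unfolding \<delta>_def Onr_def T_def b_def
        by (rule key_claim[OF rho t0 m j1]) (use d0 in \<open>simp add: \<delta>_def\<close>)
      have L: "ln (real j + 1) \<le> (1 + 1/\<delta>) * real j powr \<delta>"
        using ln_bound[OF d0] j1 by simp
      have lnn: "ln (real j + 1) \<ge> 0" by simp
      have "ln (real j + 1) * T\<^sup>2 \<le> (1 + 1/\<delta>) * real j powr \<delta> * T\<^sup>2"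
        using L by (intro mult_right_mono) auto
      also have "\<dots> \<le> (1 + 1/\<delta>) * Onr"
        unfolding mult.assoc using K d1 by (intro mult_left_mono) auto
      finally have "ln (real j + 1) * T\<^sup>2 / (1 + 1/\<delta>) \<le> Onr"
        using d1 by (simp add: divide_le_eq mult.commute)
      then have "sqrt (ln (real j + 1) * T\<^sup>2 / (1 + 1/\<delta>)) \<le> sqrt Onr"
        by (rule real_sqrt_le_mono)
      moreover have "sqrt (ln (real j + 1) * T\<^sup>2 / (1 + 1/\<delta>)) = c * f j"
        using T0 lnn d0 by (simp add: c_def f_def T_def real_sqrt_mult real_sqrt_divide)
      ultimately show ?thesis by simp
    qed
    have Onn: "Onr \<ge> 0"
    proof -
      have "c * f 1 \<le> sqrt Onr" using claim n by simp
      moreover have "f 1 \<ge> 0" unfolding f_def using decr_rearr_nonneg[of 1 n b] n by simp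
      ultimately have "sqrt Onr \<ge> 0" using cp by (smt (verit) mult_nonneg_nonneg)
      then show ?thesis by simp
    qed
    have "Max (f ` {1..n}) \<in> f ` {1..n}" using n by (intro Max_in) auto
    then obtain j0 where j0: "j0 \<in> {1..n}" "Max (f ` {1..n}) = f j0" by auto
    have "c * Max (f ` {1..n}) \<le> Onr powr (1/2)"
      using claim[OF j0(1)] j0(2) Onn by (simp add: powr_half_sqrt)
    then show "opnorm (hconj q / 2) (hconj p / 2) m n (\<lambda>j i. (A i j)\<^sup>2) powr (1/2)
      \<ge> c * Max ((\<lambda>j. sqrt (ln (real j + 1)) *
               decr_rearr n (\<lambda>j. lnorm (ereal (2 * real_of_ereal q / (2 - real_of_ereal q)))
                                   {1..m} (\<lambda>i. A i j)) j) ` {1..n})"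
      unfolding sig sin tdef Onr_def[symmetric] f_def b_def .
  qed
qed

end
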